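(* Let $\Gamma$ be a non-abelian torsion-free group and $\rho=(\rho_L,\rho_R):\Gamma\to G\times G$ an admissible representation such that $\rho_L,\rho_R$ are not conjugate in $G$. Let $J\subset\overline\Lambda(\rho)$ be a nonempty $\rho(\Gamma)$-invariant subset. Then $\overline E(J)=\overline E(\rho)$.
   Context: $E=\mathbb R^4$ with a quadratic form $Q$ of signature $(2,2)$ and bilinear form $\langle\cdot|\cdot\rangle$; anti-de Sitter space is $\{Q=-1\}$, $S(E)$ the sphere of rays, $P(E)$ the projective space; $\overline{\mathbb{ADS}}$ is the projection of $\{Q<0\}$ to $P(E)$, identified with $G=\mathrm{PSL}(2,\mathbb R)$, and $\overline{\mathrm{Ein}}_2$ the projection of the null cone $\{Q=0\}$. $G\times G\cong\mathrm{SO}_0(2,2)$ acts projectively ($g\mapsto g_Lgg_R^{-1}$). $\overline\Lambda(\rho)$ is the closure in $P(E)$ of the set of attractive fixed points in $P(E)$ of elements of $\rho(\Gamma)$; it lies in $\overline{\mathrm{Ein}}_2$. It is the projection of $\Lambda(\rho)\cup-\Lambda(\rho)$, where $\Lambda(\rho)\subset S(E)$ is a closed subset (one of the two minimal closed invariant subsets of $S(E)$) projecting injectively onto $\overline\Lambda(\rho)$; thus each $[p]\in\overline\Lambda(\rho)$ has a distinguished representative ray $p\in\Lambda(\rho)$ (take any vector representative of this ray). For $J\subset\overline\Lambda(\rho)$, $\overline E(J)$ is the interior of $\{[x]\in\overline{\mathbb{ADS}}:\ \langle x|p\rangle\langle x|q\rangle>0$ for all $[p],[q]\in J$ with $p,q\in\Lambda(\rho)\}$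 (the sign is independent of the representative $x$), and $\overline E(\rho)=\overline E(\overline\Lambda(\rho))$. Admissible: faithful, discrete image, and lifting to a representation into $\mathrm{Isom}_0(\widetilde{\mathrm{AdS}})=(\widetilde G\times\widetilde G)/\mathcal Z$ preserving a generic closed achronal subset of $\widehat{\mathrm{Ein}}_2$ (the universal cover of the conformal boundary) with at least two points; generic means not containing two points $x,\delta(x)$, $\delta$ the generator of the center of $\widetilde G$, and achronal means no two distinct points are causally related. *)

theory Defs
  imports "HOL-Analysis.Analysis" "HOL-Algebra.Group"
begin

definition QF :: "real^2^2 \<Rightarrow> real" where
  "QF x = - det x"

definition bil :: "real^2^2 \<Rightarrow> real^2^2 \<Rightarrow> real" where
  "bil x y = (QF (x + y) - QF x - QF y) / 2"

text \<open>Subsets of P(E) (resp. S(E)) are represented by cones in E - {0} invariant under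
  nonzero (resp. positive) scalings; closure/interior in P(E) correspond to closure/interior
  in E - {0} (the projection is an open quotient map).\<close>

definition proj_conv :: "(nat \<Rightarrow> 'a::real_normed_vector) \<Rightarrow> 'a \<Rightarrow> bool" where
  "proj_conv xs p \<longleftrightarrow> (\<exists>c::nat \<Rightarrow> real. (\<lambda>n. c n *\<^sub>R xs n) \<longlonglongrightarrow> p)"

text \<open>[p] is an attractive fixed point in P(E) of the projective map induced by T.\<close>
definition attr_fixed :: "('a::real_normed_vector \<Rightarrow> 'a) \<Rightarrow> 'a \<Rightarrow> bool" where
  "attr_fixed T p \<longleftrightarrow> p \<noteq> 0 \<and> (\<exists>c. T p = c *\<^sub>R p) \<and>
     (\<exists>U. open U \<and> p \<in> U \<and> (\<forall>u\<in>U. u \<noteq> 0 \<longrightarrow> proj_conv (\<lambda>n. (T ^^ n) u) p))"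

text \<open>An element of PSL(2,R) is represented by an SL(2,R) matrix, determined up to sign.\<close>
definition psl_rep :: "('g, 'b) monoid_scheme \<Rightarrow> ('g \<Rightarrow> real^2^2) \<Rightarrow> bool" where
  "psl_rep \<Gamma> L \<longleftrightarrow> (\<forall>a\<in>carrier \<Gamma>. det (L a) = 1) \<and>
     (\<forall>a\<in>carrier \<Gamma>. \<forall>b\<in>carrier \<Gamma>.
        L (a \<otimes>\<^bsub>\<Gamma>\<^esub> b) = L a ** L b \<or> L (a \<otimes>\<^bsub>\<Gamma>\<^esub> b) = - (L a ** L b))"

definition psl_eq :: "real^2^2 \<Rightarrow> real^2^2 \<Rightarrow> bool" where
  "psl_eq A B \<longleftrightarrow> A = B \<or> A = - B"

definition psl_dist :: "real^2^2 \<Rightarrow> real^2^2 \<Rightarrow> real" where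
  "psl_dist A B = min (norm (A - B)) (norm (A + B))"

definition faithful_rep :: "('g, 'b) monoid_scheme \<Rightarrow> ('g \<Rightarrow> real^2^2) \<Rightarrow> ('g \<Rightarrow> real^2^2) \<Rightarrow> bool" where
  "faithful_rep \<Gamma> L R \<longleftrightarrow> (\<forall>a\<in>carrier \<Gamma>. \<forall>b\<in>carrier \<Gamma>.
      psl_eq (L a) (L b) \<and> psl_eq (R a) (R b) \<longrightarrow> a = b)"

definition discrete_image :: "('g, 'b) monoid_scheme \<Rightarrow> ('g \<Rightarrow> real^2^2) \<Rightarrow> ('g \<Rightarrow> real^2^2) \<Rightarrow> bool" where
  "discrete_image \<Gamma> L R \<longleftrightarrow> (\<forall>a\<in>carrier \<Gamma>. \<exists>\<epsilon>>0. \<forall>b\<in>carrier \<Gamma>.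
      psl_dist (L a) (L b) < \<epsilon> \<and> psl_dist (R a) (R b) < \<epsilon> \<longrightarrow> psl_eq (L a) (L b) \<and> psl_eq (R a) (R b))"

definition conjugate_in_G :: "('g, 'b) monoid_scheme \<Rightarrow> ('g \<Rightarrow> real^2^2) \<Rightarrow> ('g \<Rightarrow> real^2^2) \<Rightarrow> bool" where
  "conjugate_in_G \<Gamma> L R \<longleftrightarrow> (\<exists>g::real^2^2. det g = 1 \<and>
      (\<forall>a\<in>carrier \<Gamma>. psl_eq (R a) (g ** L a ** matrix_inv g)))"

definition angvec :: "real \<Rightarrow> real^2" where
  "angvec \<theta> = vector [cos \<theta>, sin \<theta>]"

text \<open>Elements of the universal cover of PSL(2,R): continuous lifts f : R -> R of the projective
  action of A on RP^1 = R / pi Z (theta |-> [cos theta, sin theta]).  The generator delta of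
  the center is the translation by pi.\<close>
definition lifts_to :: "real^2^2 \<Rightarrow> (real \<Rightarrow> real) \<Rightarrow> bool" where
  "lifts_to A f \<longleftrightarrow> continuous_on UNIV f \<and>
     (\<forall>\<theta>. \<exists>c. c \<noteq> 0 \<and> A *v angvec \<theta> = c *\<^sub>R angvec (f \<theta>))"

text \<open>The conformal boundary of the universal cover of AdS, on which (G~ x G~)/Z acts, is the
  cylinder R^2 / <(pi,pi)> (null coordinates).  A subset of it is represented by its
  (pi,pi)-periodic preimage in R^2.  Distinct points are causally related iff
  (x-x')(y-y') <= 0; delta acts by (x,y) |-> (x+pi,y).\<close>
definition admissible :: "('g, 'b) monoid_scheme \<Rightarrow> ('g \<Rightarrow> real^2^2) \<Rightarrow> ('g \<Rightarrow> real^2^2) \<Rightarrow> bool" where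
  "admissible \<Gamma> L R \<longleftrightarrow> faithful_rep \<Gamma> L R \<and> discrete_image \<Gamma> L R \<and>
    (\<exists>(fL :: 'g \<Rightarrow> real \<Rightarrow> real) (fR :: 'g \<Rightarrow> real \<Rightarrow> real) (\<Lambda>h :: (real \<times> real) set).
       \<comment> \<open>lift of rho to a representation into (G~ x G~)/Z, Z the diagonal center\<close>
       (\<forall>a\<in>carrier \<Gamma>. lifts_to (L a) (fL a) \<and> lifts_to (R a) (fR a)) \<and>
       (\<forall>a\<in>carrier \<Gamma>. \<forall>b\<in>carrier \<Gamma>. \<exists>k::int. \<forall>t.
           fL (a \<otimes>\<^bsub>\<Gamma>\<^esub> b) t = fL a (fL b t) + of_int k * pi \<and>
           fR (a \<otimes>\<^bsub>\<Gamma>\<^esub> b) t = fR a (fR b t) + of_int k * pi) \<and>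
       \<comment> \<open>the preserved subset of the boundary cylinder (via periodic lift)\<close>
       (\<forall>x y. (x, y) \<in> \<Lambda>h \<longleftrightarrow> (x + pi, y + pi) \<in> \<Lambda>h) \<and>
       closed \<Lambda>h \<and>
       (\<forall>a\<in>carrier \<Gamma>. (\<lambda>(x, y). (fL a x, fR a y)) ` \<Lambda>h = \<Lambda>h) \<and>
       \<comment> \<open>at least two points\<close>
       (\<exists>x y x' y'. (x, y) \<in> \<Lambda>h \<and> (x', y') \<in> \<Lambda>h \<and>
           \<not> (\<exists>k::int. x' = x + of_int k * pi \<and> y' = y + of_int k * pi)) \<and>
       \<comment> \<open>generic\<close>
       (\<forall>x y. (x, y) \<in> \<Lambda>h \<longrightarrow> (x + pi, y) \<notin> \<Lambda>h) \<and>
       \<comment> \<open>achronal: no two distinct points causally related\<close>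
       (\<forall>x y x' y'. (x, y) \<in> \<Lambda>h \<and> (x', y') \<in> \<Lambda>h \<and> (x, y) \<noteq> (x', y') \<longrightarrow>
           (x - x') * (y - y') > 0))"

text \<open>Linear action of (g_L, g_R) on E: x |-> g_L x g_R^{-1} (defined up to sign).\<close>
definition act :: "('g \<Rightarrow> real^2^2) \<Rightarrow> ('g \<Rightarrow> real^2^2) \<Rightarrow> 'g \<Rightarrow> real^2^2 \<Rightarrow> real^2^2" where
  "act L R a x = L a ** x ** matrix_inv (R a)"

text \<open>Cone in E - {0} over the limit set overline-Lambda(rho) in P(E).\<close>
definition limit_cone :: "('g, 'b) monoid_scheme \<Rightarrow> ('g \<Rightarrow> real^2^2) \<Rightarrow> ('g \<Rightarrow> real^2^2) \<Rightarrow> (real^2^2) set" where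
  "limit_cone \<Gamma> L R = closure {p. \<exists>a\<in>carrier \<Gamma>. attr_fixed (act L R a) p} - {0}"

definition ray_invariant :: "('g, 'b) monoid_scheme \<Rightarrow> ('g \<Rightarrow> real^2^2) \<Rightarrow> ('g \<Rightarrow> real^2^2) \<Rightarrow> (real^2^2) set \<Rightarrow> bool" where
  "ray_invariant \<Gamma> L R K \<longleftrightarrow> (\<forall>a\<in>carrier \<Gamma>. \<exists>s\<in>{1, -1::real}. (\<lambda>x. s *\<^sub>R act L R a x) ` K = K)"

definition closed_ray_set :: "(real^2^2) set \<Rightarrow> bool" where
  "closed_ray_set K \<longleftrightarrow> 0 \<notin> K \<and> (\<forall>x\<in>K. \<forall>c>0. c *\<^sub>R x \<in> K) \<and> closure K - {0} \<subseteq> K"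

text \<open>Lambda(rho) in S(E): a minimal closed invariant subset of S(E) projecting injectively
  onto overline-Lambda(rho).\<close>
definition is_Lambda :: "('g, 'b) monoid_scheme \<Rightarrow> ('g \<Rightarrow> real^2^2) \<Rightarrow> ('g \<Rightarrow> real^2^2) \<Rightarrow> (real^2^2) set \<Rightarrow> bool" where
  "is_Lambda \<Gamma> L R \<Lambda> \<longleftrightarrow> closed_ray_set \<Lambda> \<and> ray_invariant \<Gamma> L R \<Lambda> \<and>
     (\<forall>K. K \<noteq> {} \<and> K \<subseteq> \<Lambda> \<and> closed_ray_set K \<and> ray_invariant \<Gamma> L R K \<longrightarrow> K = \<Lambda>) \<and>
     \<Lambda> \<inter> uminus ` \<Lambda> = {} \<and> \<Lambda> \<union> uminus ` \<Lambda> = limit_cone \<Gamma> L R"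

text \<open>Cone in E - {0} over overline-E(J), for J given as a cone.\<close>
definition E_bar :: "(real^2^2) set \<Rightarrow> (real^2^2) set \<Rightarrow> (real^2^2) set" where
  "E_bar \<Lambda> J = interior {x. QF x < 0 \<and>
      (\<forall>p\<in>\<Lambda> \<inter> J. \<forall>q\<in>\<Lambda> \<inter> J. bil x p * bil x q > 0)}"

end

theory Submission
  imports Defs
begin

lemma sq4: fixes a b c d :: real assumes "a \<noteq> 0 \<or> b \<noteq> 0 \<or> c \<noteq> 0 \<or> d \<noteq> 0" shows "a^2+b^2+c^2+d^2 > 0"
proof -
  have "0 \<le> a^2+b^2" "0 \<le> c^2+d^2" by simp_all
  moreover have "0 < a^2+b^2 \<or> 0 < c^2+d^2" using assms sum_power2_gt_zero_iff by blast
  ultimately show ?thesis by linarith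
qed
lemma bil_formula: "bil x y = -(x$1$1*y$2$2 + x$2$2*y$1$1 - x$1$2*y$2$1 - x$2$1*y$1$2)/2"
  unfolding bil_def QF_def det_2 by (simp add: algebra_simps)
lemma cont_bil: "continuous_on UNIV (\<lambda>p. bil y p)"
  unfolding bil_formula by (intro continuous_intros) auto
lemma bil_lin: "bil (x + t *\<^sub>R w) p = bil x p + t * bil w p"
  unfolding bil_formula by (simp add: field_simps)
lemma bil_nondeg: assumes "(p::real^2^2) \<noteq> 0" shows "\<exists>w. bil w p \<noteq> 0"
proof -
  define w :: "real^2^2" where "w = (\<chi> i j. if i = 1 \<and> j = 1 then p$2$2 else if i = 2 \<and> j = 2 then p$1$1
     else if i = 1 \<and> j = 2 then - p$2$1 else - p$1$2)"
  have eq: "bil w p = -((p$2$2)^2 + (p$1$1)^2 + (p$2$1)^2 + (p$1$2)^2)/2"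
    unfolding bil_formula w_def by (simp add: power2_eq_square)
  have nz: "p$1$1 \<noteq> 0 \<or> p$1$2 \<noteq> 0 \<or> p$2$1 \<noteq> 0 \<or> p$2$2 \<noteq> 0"
    using assms by (auto simp: vec_eq_iff forall_2)
  have pos: "0 < (p$2$2)^2 + (p$1$1)^2 + (p$2$1)^2 + (p$1$2)^2"
    by (rule sq4) (use nz in blast)
  have gen: "\<And>y S::real. y = -S/2 \<Longrightarrow> 0 < S \<Longrightarrow> y \<noteq> 0" by linarith
  have "bil w p \<noteq> 0" by (rule gen[OF eq pos])
  then show ?thesis by blast
qed
lemma matrix_add_rdistrib': "((A::real^2^2) + B) ** C = A ** C + B ** C"
  by (vector matrix_matrix_mult_def sum.distrib[symmetric] field_simps)
lemma act_linear: "linear (\<lambda>x::real^2^2. s *\<^sub>R ((A::real^2^2) ** x ** (B::real^2^2)))"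
proof (rule linearI)
  fix x y :: "real^2^2"
  show "s *\<^sub>R (A ** (x + y) ** B) = s *\<^sub>R (A ** x ** B) + s *\<^sub>R (A ** y ** B)"
    by (simp only: matrix_add_ldistrib matrix_add_rdistrib' scaleR_add_right)
next
  fix c :: real and x :: "real^2^2"
  have "A ** (c *\<^sub>R x) ** B = c *\<^sub>R (A ** x ** B)"
    by (simp only: matrix_scalar_ac scalar_matrix_assoc[symmetric])
  then show "s *\<^sub>R (A ** (c *\<^sub>R x) ** B) = c *\<^sub>R (s *\<^sub>R (A ** x ** B))" by simp
qed
lemma act_inj: assumes "invertible (A::real^2^2)" "invertible (B::real^2^2)" "s \<noteq> 0"
  shows "inj (\<lambda>x::real^2^2. s *\<^sub>R (A ** x ** B))"
proof
  fix x y assume "s *\<^sub>R (A ** x ** B) = s *\<^sub>R (A ** y ** B)"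
  then have e: "A ** x ** B = A ** y ** B" using assms(3) by simp
  obtain A' where A': "A' ** A = mat 1" using assms(1) unfolding invertible_def by blast
  obtain B' where B': "B ** B' = mat 1" using assms(2) unfolding invertible_def by blast
  have gen: "\<And>z. A' ** (A ** z ** B) ** B' = z"
  proof -
    fix z
    have "A' ** (A ** z ** B) ** B' = (A' ** A) ** z ** (B ** B')" by (simp only: matrix_mul_assoc)
    also have "\<dots> = z" by (simp add: A' B')
    finally show "A' ** (A ** z ** B) ** B' = z" .
  qed
  have "x = A' ** (A ** x ** B) ** B'" by (rule gen[symmetric])
  also have "\<dots> = A' ** (A ** y ** B) ** B'" by (simp only: e)
  also have "\<dots> = y" by (rule gen)
  finally show "x = y" .
qed
lemma inv_matrix_inv: assumes "invertible (A::real^2^2)" shows "invertible (matrix_inv A)"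
proof -
  have "A ** matrix_inv A = mat 1 \<and> matrix_inv A ** A = mat 1"
    unfolding matrix_inv_def by (rule someI_ex) (use assms in \<open>simp add: invertible_def\<close>)
  then show ?thesis unfolding invertible_def by blast
qed

lemma sign_contra:
  fixes b c e d tau :: real
  assumes "b \<noteq> 0" "c \<noteq> 0" "tau > 0" "tau * \<bar>c * e\<bar> < 1/2"
  shows "((- tau * c * b) * c) * (b + (- tau * c * b) * e) < 0"
proof -
  have "\<bar>tau * c * e\<bar> < 1/2" using assms(3,4) by (simp add: abs_mult)
  then have h: "1 - tau * c * e > 0" by linarith
  have eq: "((- tau * c * b) * c) * (b + (- tau * c * b) * e) = - ((tau * (c*c) * (b*b)) * (1 - tau * c * e))"
    by (simp add: algebra_simps)
  have P:  "tau * (c*c) * (b*b) > 0"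
  proof -
    have "c*c > 0" using assms(2) not_real_square_gt_zero by blast
    moreover have "b*b > 0" using assms(1) not_real_square_gt_zero by blast
    ultimately show ?thesis using assms(3) by (simp add: mult_pos_pos)
  qed
  have "(tau * (c*c) * (b*b)) * (1 - tau * c * e) > 0" using P h by (rule mult_pos_pos)
  then show ?thesis by (simp only: eq neg_less_0_iff_less)
qed

theorem mainTheorem8:
  fixes \<Gamma> :: "('g, 'b) monoid_scheme"
    and L R :: "'g \<Rightarrow> real^2^2"
    and \<Lambda> J :: "(real^2^2) set"
  assumes "group \<Gamma>"
    and "\<exists>a\<in>carrier \<Gamma>. \<exists>b\<in>carrier \<Gamma>. a \<otimes>\<^bsub>\<Gamma>\<^esub> b \<noteq> b \<otimes>\<^bsub>\<Gamma>\<^esub> a"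
    and "\<forall>a\<in>carrier \<Gamma>. a \<noteq> \<one>\<^bsub>\<Gamma>\<^esub> \<longrightarrow> (\<forall>n::nat. n > 0 \<longrightarrow> a [^]\<^bsub>\<Gamma>\<^esub> n \<noteq> \<one>\<^bsub>\<Gamma>\<^esub>)"
    and "psl_rep \<Gamma> L" and "psl_rep \<Gamma> R"
    and "admissible \<Gamma> L R"
    and "\<not> conjugate_in_G \<Gamma> L R"
    and "is_Lambda \<Gamma> L R \<Lambda>"
    and "J \<noteq> {}" and "J \<subseteq> limit_cone \<Gamma> L R"
    and "\<forall>x\<in>J. \<forall>c::real. c \<noteq> 0 \<longrightarrow> c *\<^sub>R x \<in> J"
    and "\<forall>a\<in>carrier \<Gamma>. act L R a ` J = J"
  shows "E_bar \<Lambda> J = E_bar \<Lambda> (limit_cone \<Gamma> L R)"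
proof -
  note isL = assms(8)[unfolded is_Lambda_def]
  have crs: "closed_ray_set \<Lambda>" using isL by (rule conjunct1)
  have rinv: "ray_invariant \<Gamma> L R \<Lambda>" using isL[THEN conjunct2] by (rule conjunct1)
  have minL0: "\<forall>K. K \<noteq> {} \<and> K \<subseteq> \<Lambda> \<and> closed_ray_set K \<and> ray_invariant \<Gamma> L R K \<longrightarrow> K = \<Lambda>"
    using isL[THEN conjunct2, THEN conjunct2] by (rule conjunct1)
  have un: "\<Lambda> \<union> uminus ` \<Lambda> = limit_cone \<Gamma> L R"
    using isL[THEN conjunct2, THEN conjunct2, THEN conjunct2] by (rule conjunct2)
  have minL: "\<And>K. K \<noteq> {} \<Longrightarrow> K \<subseteq> \<Lambda> \<Longrightarrow> closed_ray_set K \<Longrightarrow> ray_invariant \<Gamma> L R K \<Longrightarrow> K = \<Lambda>"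
  proof -
    fix K assume "K \<noteq> {}" "K \<subseteq> \<Lambda>" "closed_ray_set K" "ray_invariant \<Gamma> L R K"
    then have "K \<noteq> {} \<and> K \<subseteq> \<Lambda> \<and> closed_ray_set K \<and> ray_invariant \<Gamma> L R K" by (intro conjI)
    then show "K = \<Lambda>" using minL0 by (rule_tac mp[OF spec[OF minL0]]) 
  qed
  have crs': "0 \<notin> \<Lambda> \<and> (\<forall>x\<in>\<Lambda>. \<forall>c>0. c *\<^sub>R x \<in> \<Lambda>) \<and> closure \<Lambda> - {0} \<subseteq> \<Lambda>"
    using crs unfolding closed_ray_set_def .
  have L0: "0 \<notin> \<Lambda>" using crs' by (rule conjunct1)
  have Lpos: "\<And>x c. x \<in> \<Lambda> \<Longrightarrow> c > 0 \<Longrightarrow> c *\<^sub>R x \<in> \<Lambda>" using crs'[THEN conjunct2, THEN conjunct1] by blast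
  have Lcl: "closure \<Lambda> - {0} \<subseteq> \<Lambda>" using crs'[THEN conjunct2] by (rule conjunct2)
  have Lsub: "\<Lambda> \<subseteq> limit_cone \<Gamma> L R" using un by blast
  define D where "D = \<Lambda> \<inter> J"
  have DL: "\<Lambda> \<inter> limit_cone \<Gamma> L R = \<Lambda>" using Lsub by blast
  have Dne: "D \<noteq> {}"
  proof -
    obtain x where xJ: "x \<in> J" using assms(9) by blast
    then have "x \<in> \<Lambda> \<union> uminus ` \<Lambda>" using assms(10) un by blast
    then show ?thesis
    proof
      assume "x \<in> \<Lambda>" then show ?thesis using xJ D_def by blast
    next
      assume "x \<in> uminus ` \<Lambda>"
      then have "-x \<in> \<Lambda>" by auto
      moreover have "(-1::real) *\<^sub>R x \<in> J"
      proof -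
        have "(-1::real) \<noteq> 0" by simp
        then show ?thesis using assms(11) xJ by blast
      qed
      ultimately show ?thesis using D_def by auto
    qed
  qed
  \<comment> \<open>minimality: Lambda is contained in the closure of D\<close>
  have LclD: "\<Lambda> \<subseteq> closure D"
  proof -
    define K where "K = closure D - {0}"
    have DK: "D \<subseteq> K" using L0 closure_subset unfolding K_def D_def by blast
    have "K = \<Lambda>"
    proof (rule minL)
      show "K \<noteq> {}" using DK Dne by blast
      show "K \<subseteq> \<Lambda>"
      proof -
        have "closure D \<subseteq> closure \<Lambda>" unfolding D_def by (intro closure_mono) blast
        then show ?thesis using Lcl unfolding K_def by blast
      qed
      show "closed_ray_set K"
        unfolding closed_ray_set_def
      proof (intro conjI ballI allI impI)
        show "0 \<notin> K" unfolding K_def by blast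
      next
        fix x and c :: real assume xK: "x \<in> K" and c: "c > 0"
        have "(\<lambda>y. c *\<^sub>R y) ` closure D \<subseteq> closure D"
        proof (rule image_closure_subset)
          show "continuous_on (closure D) (\<lambda>y. c *\<^sub>R y)" by (intro continuous_intros)
          show "closed (closure D)" by simp
          show "(\<lambda>y. c *\<^sub>R y) ` D \<subseteq> closure D"
            using closure_subset Lpos assms(11) c unfolding D_def by fastforce
        qed
        then show "c *\<^sub>R x \<in> K" using xK c unfolding K_def by auto
      next
        show "closure K - {0} \<subseteq> K"
        proof -
          have "closure K \<subseteq> closure D" unfolding K_def
            by (metis Diff_subset closure_closure closure_mono)
          then show ?thesis unfolding K_def by blast
        qed
      qed
      show "ray_invariant \<Gamma> L R K"
        unfolding ray_invariant_def
      proof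
        fix a assume a: "a \<in> carrier \<Gamma>"
        obtain s where s: "s \<in> {1, -1::real}" and fs: "(\<lambda>x. s *\<^sub>R act L R a x) ` \<Lambda> = \<Lambda>"
          using rinv a unfolding ray_invariant_def by blast
        define f where "f = (\<lambda>x. s *\<^sub>R act L R a x)"
        have s0: "s \<noteq> 0" using s by auto
        have invL: "invertible (L a)" using assms(4) a unfolding psl_rep_def invertible_det_nz by auto
        have invR: "invertible (R a)" using assms(5) a unfolding psl_rep_def invertible_det_nz by auto
        have f_eq: "f = (\<lambda>x. s *\<^sub>R (L a ** x ** matrix_inv (R a)))"
          unfolding f_def act_def by simp
        have lin: "linear f" unfolding f_eq by (rule act_linear)
        have inj: "inj f" unfolding f_eq by (rule act_inj[OF invL inv_matrix_inv[OF invR] s0])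
        have fL: "f ` \<Lambda> = \<Lambda>" using fs f_def by simp
        have fJ: "f ` J = J"
        proof -
          have aJ: "act L R a ` J = J" using assms(12) a by blast
          have "f ` J = (\<lambda>x. s *\<^sub>R x) ` (act L R a ` J)" unfolding f_def by (simp add: image_image)
          also have "\<dots> = (\<lambda>x. s *\<^sub>R x) ` J" using aJ by simp
          also have "\<dots> = J"
          proof
            show "(\<lambda>x. s *\<^sub>R x) ` J \<subseteq> J" using assms(11) s0 by blast
            show "J \<subseteq> (\<lambda>x. s *\<^sub>R x) ` J"
            proof
              fix y assume y: "y \<in> J"
              have "(1/s) *\<^sub>R y \<in> J" using assms(11) y s0 by simp
              moreover have "y = s *\<^sub>R ((1/s) *\<^sub>R y)" using s0 by simp
              ultimately show "y \<in> (\<lambda>x. s *\<^sub>R x) ` J" by blast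
            qed
          qed
          finally show ?thesis .
        qed
        have fD: "f ` D = D" unfolding D_def using inj fL fJ by (simp add: image_Int)
        have f0: "f 0 = 0" using lin by (simp add: linear_0)
        have "f ` K = f ` closure D - f ` {0}" unfolding K_def using inj by (simp add: image_set_diff)
        also have "\<dots> = closure (f ` D) - {0}"
          using closure_injective_linear_image[OF lin inj] f0 by simp
        also have "\<dots> = K" unfolding K_def fD ..
        finally have "f ` K = K" .
        then show "\<exists>s\<in>{1, -1::real}. (\<lambda>x. s *\<^sub>R act L R a x) ` K = K" using s f_def by blast
      qed
    qed
    then show ?thesis unfolding K_def by blast
  qed
  define S where "S = (\<lambda>X. {x. QF x < 0 \<and> (\<forall>p\<in>\<Lambda> \<inter> X. \<forall>q\<in>\<Lambda> \<inter> X. bil x p * bil x q > 0)})"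
  have EJ: "E_bar \<Lambda> J = interior (S J)" unfolding E_bar_def S_def by simp
  have EL: "E_bar \<Lambda> (limit_cone \<Gamma> L R) = interior (S (limit_cone \<Gamma> L R))" unfolding E_bar_def S_def by simp
  have SL: "S (limit_cone \<Gamma> L R) = {x. QF x < 0 \<and> (\<forall>p\<in>\<Lambda>. \<forall>q\<in>\<Lambda>. bil x p * bil x q > 0)}"
    unfolding S_def DL by simp
  have SJ: "S J = {x. QF x < 0 \<and> (\<forall>p\<in>D. \<forall>q\<in>D. bil x p * bil x q > 0)}"
    unfolding S_def D_def by simp
  have sub1: "S (limit_cone \<Gamma> L R) \<subseteq> S J" unfolding SL SJ D_def by blast
  obtain d0 where d0: "d0 \<in> D" using Dne by blast
  have sub2: "interior (S J) \<subseteq> S (limit_cone \<Gamma> L R)"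
  proof
    fix x assume xU: "x \<in> interior (S J)"
    define U where "U = interior (S J)"
    have US: "U \<subseteq> S J" unfolding U_def by (rule interior_subset)
    have xS: "x \<in> S J" using xU unfolding U_def by (rule interior_subset[THEN subsetD])
    have hpos: "\<And>y q. y \<in> U \<Longrightarrow> q \<in> D \<Longrightarrow> bil y q * bil y d0 > 0"
    proof -
      fix y q assume y: "y \<in> U" and q: "q \<in> D"
      have "y \<in> S J" using US y by (rule subsetD)
      then have "\<forall>p\<in>D. \<forall>q\<in>D. bil y p * bil y q > 0" unfolding SJ by simp
      then show "bil y q * bil y d0 > 0" using q d0 by blast
    qed
    have hge: "\<And>y p. y \<in> U \<Longrightarrow> p \<in> closure D \<Longrightarrow> bil y p * bil y d0 \<ge> 0"
    proof -
      fix y p assume y: "y \<in> U" and p: "p \<in> closure D"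
      have cl: "closed {p. 0 \<le> bil y p * bil y d0}"
        by (intro closed_Collect_le continuous_intros cont_bil)
      have "D \<subseteq> {p. 0 \<le> bil y p * bil y d0}" using hpos[OF y] by (auto intro: less_imp_le)
      then have "closure D \<subseteq> {p. 0 \<le> bil y p * bil y d0}" using cl by (rule closure_minimal)
      then show "bil y p * bil y d0 \<ge> 0" using p by blast
    qed
    have b0: "bil x d0 \<noteq> 0" using hpos[OF xU[folded U_def] d0] by auto
    have xU': "x \<in> U" using xU unfolding U_def .
    have oU: "open U" unfolding U_def by (rule open_interior)
    have hnz: "\<And>p. p \<in> \<Lambda> \<Longrightarrow> bil x p \<noteq> 0"
    proof
      fix p assume pL: "p \<in> \<Lambda>" and bz: "bil x p = 0"
      have p0: "p \<noteq> 0" using pL L0 by blast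
      have pD: "p \<in> closure D" using pL LclD by blast
      obtain w where c0: "bil w p \<noteq> 0" using bil_nondeg[OF p0] by blast
      obtain \<delta> where dpos: "\<delta> > 0" and ball: "ball x \<delta> \<subseteq> U"
        using openE[OF oU xU'] by metis
      define b where "b = bil x d0"
      define c where "c = bil w p"
      define e where "e = bil w d0"
      define X where "X = \<bar>c * b\<bar> * norm w"
      define Y where "Y = \<bar>c * e\<bar>"
      have X0: "X \<ge> 0" unfolding X_def by simp
      have Y0: "Y \<ge> 0" unfolding Y_def by simp
      define tau where "tau = min (\<delta> / (2 * (X + 1))) (1 / (2 * (Y + 1)))"
      have gen: "\<And>Z::real. 0 \<le> Z \<Longrightarrow> 0 < 2 * (Z + 1)" by simp
      have den1: "2 * (X + 1) > 0" by (rule gen[OF X0])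
      have den2: "2 * (Y + 1) > 0" by (rule gen[OF Y0])
      have tpos: "tau > 0" unfolding tau_def using dpos den1 den2 by simp
      have t1: "tau * (2 * (X + 1)) \<le> \<delta>"
      proof -
        have "tau \<le> \<delta> / (2 * (X + 1))" unfolding tau_def by (rule min.cobounded1)
        then show ?thesis using den1 by (simp add: pos_le_divide_eq)
      qed
      have t2: "tau * (2 * (Y + 1)) \<le> 1"
      proof -
        have "tau \<le> 1 / (2 * (Y + 1))" unfolding tau_def by (rule min.cobounded2)
        then show ?thesis using den2 by (simp add: pos_le_divide_eq)
      qed
      have lt1: "tau * X < tau * (2 * (X + 1))"
      proof -
        have "X < 2 * (X + 1)" using X0 by simp
        then show ?thesis using tpos by (rule mult_strict_left_mono)
      qed
      have lt2: "tau * (2 * Y) < tau * (2 * (Y + 1))"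
      proof -
        have "2 * Y < 2 * (Y + 1)" by simp
        then show ?thesis using tpos by (rule mult_strict_left_mono)
      qed
      have e2: "tau * (2 * Y) = 2 * (tau * Y)" by (simp only: mult.left_commute)
      have t2': "tau * Y < 1/2" using lt2 t2 e2 by linarith
      define t where "t = - tau * c * b"
      define y where "y = x + t *\<^sub>R w"
      have "dist x y = \<bar>t\<bar> * norm w" unfolding y_def dist_norm by simp
      also have "\<dots> = tau * X" unfolding t_def X_def using tpos by (simp add: abs_mult)
      also have "\<dots> < \<delta>" using lt1 t1 by linarith
      finally have "y \<in> ball x \<delta>" by (simp only: mem_ball)
      then have yU: "y \<in> U" using ball by (rule subsetD[rotated])
      have ge: "bil y p * bil y d0 \<ge> 0" by (rule hge[OF yU pD])
      have "bil y p = t * c" unfolding y_def bil_lin c_def using bz by simp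
      moreover have "bil y d0 = b + t * e" unfolding y_def bil_lin b_def e_def by simp
      ultimately have "bil y p * bil y d0 = (t * c) * (b + t * e)" by simp
      also have "\<dots> < 0" unfolding t_def
        by (rule sign_contra[OF b0[folded b_def] c0[folded c_def] tpos t2'[unfolded Y_def]])
      finally show False using ge by simp
    qed
    have hp: "\<And>p. p \<in> \<Lambda> \<Longrightarrow> bil x p * bil x d0 > 0"
    proof -
      fix p assume pL: "p \<in> \<Lambda>"
      have "bil x p * bil x d0 \<ge> 0" using hge[OF xU[folded U_def]] pL LclD by blast
      moreover have "bil x p * bil x d0 \<noteq> 0" using hnz[OF pL] b0 by simp
      ultimately show "bil x p * bil x d0 > 0" by (metis less_le)
    qed
    have "\<forall>p\<in>\<Lambda>. \<forall>q\<in>\<Lambda>. bil x p * bil x q > 0"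
    proof (intro ballI)
      fix p q assume pL: "p \<in> \<Lambda>" and qL: "q \<in> \<Lambda>"
      have "(bil x p * bil x d0) * (bil x q * bil x d0) > 0" using hp[OF pL] hp[OF qL] by (rule mult_pos_pos)
      moreover have "(bil x p * bil x d0) * (bil x q * bil x d0) = (bil x p * bil x q) * (bil x d0 * bil x d0)"
        by (simp only: mult_ac)
      ultimately have "(bil x p * bil x q) * (bil x d0 * bil x d0) > 0" by simp
      moreover have "bil x d0 * bil x d0 > 0" using b0 not_real_square_gt_zero by blast
      ultimately show "bil x p * bil x q > 0" by (rule zero_less_mult_pos2)
    qed
    moreover have "QF x < 0" using xS unfolding SJ by blast
    ultimately show "x \<in> S (limit_cone \<Gamma> L R)" unfolding SL by blast
  qed
  have "interior (S J) \<subseteq> interior (S (limit_cone \<Gamma> L R))"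
    using interior_maximal[OF sub2] by simp
  moreover have "interior (S (limit_cone \<Gamma> L R)) \<subseteq> interior (S J)"
    using sub1 by (rule interior_mono)
  ultimately show ?thesis unfolding EJ EL by blast
qed

end
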